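(* Let $p$ be a prime with $p\equiv 1\pmod 4$, and let $$D_p(2,2)=\det\left[(i^2+2ij+2j^2)^{p-2}\right]_{1\le i,j\le p-1}.$$ Then $$\left(\frac{D_p(2,2)}{p}\right)=\begin{cases}1 & \text{if } p\equiv 1\pmod 8,\\ 0 & \text{if } p\equiv 5\pmod 8.\end{cases}$$
   Context: $\left(\frac{\cdot}{p}\right)$ denotes the Legendre symbol modulo $p$. The determinant is of the $(p-1)\times(p-1)$ integer matrix whose $(i,j)$ entry is $(i^2+2ij+2j^2)^{p-2}$. *)

theory Defs
  imports "HOL-Number_Theory.Number_Theory" "Jordan_Normal_Form.Determinant"
begin

text \<open>The (p-1)x(p-1) integer matrix with (i,j) entry (i^2+2ij+2j^2)^(p-2), 1 <= i,j <= p-1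
  (stored 0-based: entry (i,j) corresponds to indices i+1, j+1).\<close>
definition Dmat :: "nat \<Rightarrow> int mat" where
  "Dmat p = mat (p - 1) (p - 1)
     (\<lambda>(i, j). (int (i+1)^2 + 2 * int (i+1) * int (j+1) + 2 * int (j+1)^2) ^ (p - 2))"

definition D22 :: "nat \<Rightarrow> int" where
  "D22 p = det (Dmat p)"

end

theory Submission
  imports Defs
begin

locale L =
  fixes p :: nat
  assumes prime: "prime p" and p4: "p mod 4 = 1"
begin

lemma p_ge5: "p \<ge> 5"
proof -
  have "p \<ge> 2" using prime prime_ge_2_nat by blast
  moreover have "p \<noteq> 2" "p \<noteq> 3" "p \<noteq> 4" using p4 by auto
  ultimately show ?thesis by linarith
qed

lemma primeP: "prime (int p)" using prime by simp

lemma fermat_int: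
  assumes "\<not> int p dvd x"
  shows "[x ^ (p - 1) = 1] (mod int p)"
proof -
  define y where "y = nat (x mod int p)"
  have yx: "int y = x mod int p" unfolding y_def using p_ge5 by simp
  have "\<not> p dvd y"
  proof
    assume "p dvd y"
    then have "int p dvd int y" by simp
    then have "int p dvd x mod int p" using yx by simp
    then show False using assms by (simp add: dvd_mod_iff)
  qed
  then have "[y ^ (p - 1) = 1] (mod p)" using fermat_theorem prime by blast
  then have "[int y ^ (p - 1) = 1] (mod int p)" using cong_int_iff by (metis of_nat_1 of_nat_power)
  moreover have "[x = int y] (mod int p)" using yx by (simp add: cong_def)
  ultimately show ?thesis using cong_pow cong_trans by blast
qed

lemma inv_pow:
  assumes "\<not> int p dvd x"
  shows "[x * x ^ (p - 2) = 1] (mod int p)"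
proof -
  have "p - 1 = Suc (p - 2)" using p_ge5 by simp
  then have "x * x ^ (p - 2) = x ^ (p - 1)" by simp
  then show ?thesis using fermat_int[OF assms] by simp
qed

lemma pow_N_mult:
  assumes "\<not> int p dvd x"
  shows "[x ^ ((p - 1) * m) = 1] (mod int p)"
proof -
  have "[(x ^ (p - 1)) ^ m = 1 ^ m] (mod int p)" using fermat_int[OF assms] cong_pow by blast
  then show ?thesis by (simp add: power_mult)
qed

lemma cong_zero_dvd: "[x = 0] (mod int p) \<longleftrightarrow> int p dvd x"
  by (simp add: cong_0_iff)

lemma prime_dvd_mult_int: "int p dvd a * b \<Longrightarrow> int p dvd a \<or> int p dvd b"
  using primeP prime_dvd_mult_iff by blast

lemma not_dvd_range: "t \<in> {1..int p - 1} \<Longrightarrow> \<not> int p dvd t"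
proof
  assume t: "t \<in> {1..int p - 1}" and d: "int p dvd t"
  have "0 < t" "t < int p" using t by auto
  then show False using zdvd_not_zless d by blast
qed

lemma reindex_bij:
  assumes "\<not> int p dvd a"
  shows "bij_betw (\<lambda>t. (a * t) mod int p) {1..int p - 1} {1..int p - 1}"
proof -
  let ?S = "{1..int p - 1}"
  let ?f = "\<lambda>t. (a * t) mod int p"
  have inj: "inj_on ?f ?S"
  proof (rule inj_onI)
    fix x y assume x: "x \<in> ?S" and y: "y \<in> ?S" and e: "?f x = ?f y"
    then have "int p dvd a * x - a * y" by (metis mod_eq_dvd_iff)
    then have "int p dvd a * (x - y)" by (simp add: right_diff_distrib)
    then have "int p dvd x - y" using assms prime_dvd_mult_int by blast
    moreover have "\<bar>x - y\<bar> < int p" using x y by auto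
    ultimately show "x = y"
    proof (cases "x = y")
      case False
      then have "\<bar>int p\<bar> \<le> \<bar>x - y\<bar>" using dvd_imp_le_int[of "x - y" "int p"] \<open>int p dvd x - y\<close> by simp
      then show ?thesis using \<open>\<bar>x - y\<bar> < int p\<close> by simp
    qed
  qed
  have sub: "?f ` ?S \<subseteq> ?S"
  proof
    fix z assume "z \<in> ?f ` ?S"
    then obtain t where t: "t \<in> ?S" "z = (a * t) mod int p" by blast
    have "\<not> int p dvd t" using t(1) by (rule not_dvd_range)
    then have "\<not> int p dvd a * t" using assms prime_dvd_mult_int by blast
    then have "z \<noteq> 0" using t(2) by (simp add: dvd_eq_mod_eq_0)
    moreover have "z \<ge> 0" "z < int p" using t(2) p_ge5 by auto
    ultimately show "z \<in> ?S" by auto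
  qed
  have "card (?f ` ?S) = card ?S" using inj card_image by blast
  then have "?f ` ?S = ?S" using sub by (simp add: card_subset_eq)
  then show ?thesis using inj by (simp add: bij_betw_def)
qed

lemma reindex_sum:
  assumes "\<not> int p dvd a"
  shows "(\<Sum>t\<in>{1..int p - 1}. f t) = (\<Sum>t\<in>{1..int p - 1}. f ((a * t) mod int p))"
  using sum.reindex_bij_betw[OF reindex_bij[OF assms], of f] by simp

lemma power_sum:
  "[(\<Sum>t\<in>{1..int p - 1}. t ^ m) = (if (p - 1) dvd m then -1 else 0)] (mod int p)"
proof (cases "(p - 1) dvd m")
  case True
  then obtain c where c: "m = (p - 1) * c" by blast
  have "[(\<Sum>t\<in>{1..int p - 1}. t ^ m) = (\<Sum>t\<in>{1..int p - 1}. 1)] (mod int p)"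
    by (rule cong_sum) (use pow_N_mult not_dvd_range c in auto)
  moreover have "(\<Sum>t\<in>{1..int p - 1}. (1::int)) = int p - 1" using p_ge5 by simp
  moreover have "[int p - 1 = -1] (mod int p)" by (simp add: cong_iff_dvd_diff)
  ultimately show ?thesis using True cong_trans by auto
next
  case False
  obtain g where g: "residue_primroot p g" 
  proof -
    have "1 < p" using p_ge5 by simp
    then show ?thesis using prime_primitive_root_exists[OF _ prime] that by blast
  qed
  have ordg: "ord p g = p - 1" using g prime by (simp add: residue_primroot_def totient_prime)
  have "\<not> [g ^ m = 1] (mod p)" using False ordg ord_divides by metis
  then have ng: "\<not> [int g ^ m = 1] (mod int p)" using cong_int_iff by (metis of_nat_1 of_nat_power)
  have gnd: "\<not> int p dvd int g"
  proof
    assume "int p dvd int g"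
    then have "p dvd g" by simp
    then have "\<not> coprime p g" using p_ge5 by auto
    then show False using g by (simp add: residue_primroot_def)
  qed
  define S where "S = (\<Sum>t\<in>{1..int p - 1}. t ^ m)"
  have "S = (\<Sum>t\<in>{1..int p - 1}. ((int g * t) mod int p) ^ m)"
    unfolding S_def by (rule reindex_sum[OF gnd])
  also have "[\<dots> = (\<Sum>t\<in>{1..int p - 1}. (int g * t) ^ m)] (mod int p)"
    by (rule cong_sum, rule cong_pow) (simp add: cong_def)
  also have "(\<Sum>t\<in>{1..int p - 1}. (int g * t) ^ m) = int g ^ m * S"
    unfolding S_def by (simp add: power_mult_distrib sum_distrib_left)
  finally have "[int g ^ m * S = 1 * S] (mod int p)" by (simp add: cong_sym)
  then have "int p dvd (int g ^ m - 1) * S" by (simp add: cong_iff_dvd_diff left_diff_distrib)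
  moreover have "\<not> int p dvd (int g ^ m - 1)" using ng by (simp add: cong_iff_dvd_diff)
  ultimately have "int p dvd S" using prime_dvd_mult_int by blast
  then show ?thesis using False unfolding S_def by (simp add: cong_0_iff)
qed

end

context L begin

lemma geom_id: "(s::int) ^ k = (s - 1) * (\<Sum>j<k. s ^ j) + 1"
proof -
  have "s ^ k - 1 ^ k = (s - 1) * (\<Sum>j<k. 1 ^ (k - Suc j) * s ^ j)" by (rule power_diff_sumr2)
  then show ?thesis by simp
qed

lemma shift_sum:
  "(\<Sum>s\<in>{1..int p - 1}. f (s - 1)) = (\<Sum>x\<in>{0..int p - 2}. f x)"
  by (rule sum.reindex_bij_witness[of _ "\<lambda>x. x + 1" "\<lambda>s. s - 1"]) auto

lemma sum_inv_shift:
  "[(\<Sum>s\<in>{1..int p - 1}. (s - 1) ^ (p - 2)) = 1] (mod int p)"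
proof -
  have A: "{0..int p - 2} = insert 0 {1..int p - 2}" using p_ge5 by auto
  have B: "{1..int p - 1} = insert (int p - 1) {1..int p - 2}" using p_ge5 by auto
  have z: "(0::int) ^ (p - 2) = 0" using p_ge5 by simp
  have "(\<Sum>s\<in>{1..int p - 1}. (s - 1) ^ (p - 2)) = (\<Sum>x\<in>{0..int p - 2}. x ^ (p - 2))"
    by (rule shift_sum)
  also have "\<dots> = (\<Sum>x\<in>{1..int p - 2}. x ^ (p - 2))" unfolding A using z by simp
  also have "\<dots> = (\<Sum>x\<in>{1..int p - 1}. x ^ (p - 2)) - (int p - 1) ^ (p - 2)"
    unfolding B by simp
  finally have e: "(\<Sum>s\<in>{1..int p - 1}. (s - 1) ^ (p - 2)) =
      (\<Sum>x\<in>{1..int p - 1}. x ^ (p - 2)) - (int p - 1) ^ (p - 2)" .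
  have nd: "\<not> (p - 1) dvd (p - 2)"
  proof
    assume "(p - 1) dvd (p - 2)"
    then have "p - 1 \<le> p - 2" using p_ge5 by (intro dvd_imp_le) auto
    then show False using p_ge5 by simp
  qed
  have s0: "[(\<Sum>x\<in>{1..int p - 1}. x ^ (p - 2)) = 0] (mod int p)"
    using power_sum[of "p - 2"] nd by simp
  have odd: "odd (p - 2)" using p4 p_ge5 by presburger
  have "[(int p - 1) ^ (p - 2) = (-1) ^ (p - 2)] (mod int p)"
    by (rule cong_pow) (simp add: cong_iff_dvd_diff)
  then have s1: "[(int p - 1) ^ (p - 2) = -1] (mod int p)" using odd by simp
  have "[(\<Sum>x\<in>{1..int p - 1}. x ^ (p - 2)) - (int p - 1) ^ (p - 2) = 0 - (-1)] (mod int p)"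
    using s0 s1 by (rule cong_diff)
  then show ?thesis using e by simp
qed

lemma U_sum:
  assumes k: "k < p - 1"
  shows "[(\<Sum>s\<in>{1..int p - 1}. s ^ k * (s - 1) ^ (p - 2)) = (if k = 0 then 1 else - int k)] (mod int p)"
proof -
  have pp: "p - 1 = Suc (p - 2)" using p_ge5 by simp
  have tm: "s ^ k * (s - 1) ^ (p - 2) = (\<Sum>j<k. s ^ j) * (s - 1) ^ (p - 1) + (s - 1) ^ (p - 2)" for s :: int
  proof -
    have "s ^ k * (s - 1) ^ (p - 2) = ((s - 1) * (\<Sum>j<k. s ^ j) + 1) * (s - 1) ^ (p - 2)"
      by (subst geom_id) simp
    also have "\<dots> = (\<Sum>j<k. s ^ j) * ((s - 1) * (s - 1) ^ (p - 2)) + (s - 1) ^ (p - 2)"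
      by (simp add: algebra_simps)
    also have "(s - 1) * (s - 1) ^ (p - 2) = (s - 1) ^ (p - 1)" using pp by simp
    finally show ?thesis .
  qed
  have t2: "[(\<Sum>j<k. s ^ j) * (s - 1) ^ (p - 1) = (\<Sum>j<k. s ^ j) - (if s = 1 then int k else 0)] (mod int p)"
    if s: "s \<in> {1..int p - 1}" for s :: int
  proof (cases "s = 1")
    case True
    have "(0::int) ^ (p - 1) = 0" using p_ge5 by simp
    then show ?thesis using True by (simp add: power_0_left)
  next
    case False
    then have "s - 1 \<in> {1..int p - 1}" using s by auto
    then have "\<not> int p dvd (s - 1)" by (rule not_dvd_range)
    then have "[(s - 1) ^ (p - 1) = 1] (mod int p)" by (rule fermat_int)
    then have "[(\<Sum>j<k. s ^ j) * (s - 1) ^ (p - 1) = (\<Sum>j<k. s ^ j) * 1] (mod int p)"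
      by (rule cong_scalar_left)
    then show ?thesis using False by simp
  qed
  have "[(\<Sum>s\<in>{1..int p - 1}. s ^ k * (s - 1) ^ (p - 2)) =
        (\<Sum>s\<in>{1..int p - 1}. ((\<Sum>j<k. s ^ j) - (if s = 1 then int k else 0)) + (s - 1) ^ (p - 2))] (mod int p)"
    unfolding tm by (rule cong_sum, rule cong_add) (use t2 in auto)
  also have "(\<Sum>s\<in>{1..int p - 1}. ((\<Sum>j<k. s ^ j) - (if s = 1 then int k else 0)) + (s - 1) ^ (p - 2))
     = (\<Sum>j<k. \<Sum>s\<in>{1..int p - 1}. s ^ j) - int k + (\<Sum>s\<in>{1..int p - 1}. (s - 1) ^ (p - 2))"
  proof -
    have "(\<Sum>s\<in>{1..int p - 1}. (if s = 1 then int k else 0)) = int k" using p_ge5 by simp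
    then show ?thesis by (simp add: sum.distrib sum_subtractf sum.swap[of _ "{..<k}"])
  qed
  also have "[\<dots> = (\<Sum>j<k. (if j = 0 then -1 else 0)) - int k + 1] (mod int p)"
  proof (rule cong_add, rule cong_diff, rule cong_sum)
    fix j assume "j \<in> {..<k}"
    then have j: "j < p - 1" using k by simp
    have "(p - 1) dvd j \<longleftrightarrow> j = 0"
    proof
      assume "(p - 1) dvd j" show "j = 0"
      proof (rule ccontr)
        assume "j \<noteq> 0" then have "p - 1 \<le> j" using \<open>(p - 1) dvd j\<close> by (intro dvd_imp_le) auto
        then show False using j by simp
      qed
    qed simp
    then show "[(\<Sum>s\<in>{1..int p - 1}. s ^ j) = (if j = 0 then -1 else 0)] (mod int p)"
      using power_sum[of j] by simp
  qed (auto intro: sum_inv_shift)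
  also have "(\<Sum>j<k. (if j = 0 then -1 else 0::int)) = (if k = 0 then 0 else -1)"
    by (cases k) (auto simp: sum.If_cases)
  finally show ?thesis by (cases "k = 0") auto
qed

lemma W_sum:
  assumes a: "\<not> int p dvd a"
  shows "[(\<Sum>t\<in>{1..int p - 1}. t ^ k * (t - a) ^ (p - 2)) =
          a ^ (k + (p - 2)) * (\<Sum>s\<in>{1..int p - 1}. s ^ k * (s - 1) ^ (p - 2))] (mod int p)"
proof -
  have "(\<Sum>t\<in>{1..int p - 1}. t ^ k * (t - a) ^ (p - 2)) =
        (\<Sum>s\<in>{1..int p - 1}. ((a * s) mod int p) ^ k * ((a * s) mod int p - a) ^ (p - 2))"
    by (rule reindex_sum[OF a])
  also have "[\<dots> = (\<Sum>s\<in>{1..int p - 1}. (a * s) ^ k * (a * s - a) ^ (p - 2))] (mod int p)"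
    by (intro cong_sum cong_mult cong_pow cong_diff) (auto simp: cong_def)
  also have "(\<Sum>s\<in>{1..int p - 1}. (a * s) ^ k * (a * s - a) ^ (p - 2)) =
      a ^ (k + (p - 2)) * (\<Sum>s\<in>{1..int p - 1}. s ^ k * (s - 1) ^ (p - 2))"
  proof -
    have "(a * s) ^ k * (a * s - a) ^ (p - 2) = a ^ (k + (p - 2)) * (s ^ k * (s - 1) ^ (p - 2))" for s
    proof -
      have "a * s - a = a * (s - 1)" by (simp add: algebra_simps)
      then show ?thesis by (simp add: power_mult_distrib power_add)
    qed
    then show ?thesis by (simp add: sum_distrib_left)
  qed
  finally show ?thesis .
qed

end

locale L2 = L +
  fixes i h :: int
  assumes i2: "int p dvd i^2 + 1" and hdef: "2 * h = int p + 1"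
begin

definition "rho = (i - 1) * h"
definition "sig = - (i + 1) * h"
definition "G t = 1 + 2*t + 2*t^2"

lemma h2: "int p dvd 2 * h - 1" using hdef by simp

lemma cof: "LL - RR = (2*h - 1) * A + (i^2 + 1) * B \<Longrightarrow> [LL = RR] (mod int p)"
proof -
  assume e: "LL - RR = (2*h - 1) * A + (i^2 + 1) * B"
  have "int p dvd (2*h - 1) * A + (i^2 + 1) * B"
    using dvd_mult2[OF h2, of A] dvd_mult2[OF i2, of B] by (rule dvd_add)
  then show ?thesis using e by (simp add: cong_iff_dvd_diff)
qed

lemma comb5: "int p dvd a \<Longrightarrow> int p dvd b \<Longrightarrow> int p dvd c \<Longrightarrow> int p dvd d \<Longrightarrow> int p dvd e
  \<Longrightarrow> int p dvd a*A + b*B + c*C + d*D + e*E"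
  by (intro dvd_add dvd_mult2)

lemma nd_of_inv: "[a * b = 1] (mod int p) \<Longrightarrow> \<not> int p dvd a"
proof
  assume c: "[a * b = 1] (mod int p)" and d: "int p dvd a"
  then have "int p dvd a * b" by simp
  then have "[a * b = 0] (mod int p)" by (simp add: cong_0_iff)
  then have "[1 = 0] (mod int p)" using c by (metis cong_sym cong_trans)
  then have "int p dvd 1" by (simp add: cong_0_iff)
  then show False using p_ge5 by simp
qed

lemma rho_inv: "[rho * (-(i + 1)) = 1] (mod int p)"
  by (rule cof[where A = "1" and B = "-h"]) (simp add: rho_def algebra_simps power2_eq_square)

lemma sig_inv: "[sig * (i - 1) = 1] (mod int p)"
  by (rule cof[where A = "1" and B = "-h"]) (simp add: sig_def algebra_simps power2_eq_square)

lemma rho_nd: "\<not> int p dvd rho" using rho_inv nd_of_inv by blast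
lemma sig_nd: "\<not> int p dvd sig" using sig_inv nd_of_inv by blast

lemma i_inv: "[i * (-i) = 1] (mod int p)"
  by (rule cof[where A = "0" and B = "-1"]) (simp add: algebra_simps power2_eq_square)
lemma i_nd: "\<not> int p dvd i" using i_inv nd_of_inv by blast
lemma two_nd: "\<not> int p dvd 2" using hdef nd_of_inv[of 2 h] by (simp add: cong_iff_dvd_diff)
lemma h_nd: "\<not> int p dvd h" using hdef nd_of_inv[of h 2] by (simp add: cong_iff_dvd_diff mult.commute)

lemma rho_sig: "[rho - sig = i] (mod int p)"
  by (rule cof[where A = "i" and B = "0"]) (simp add: rho_def sig_def algebra_simps)

lemma sig_i: "[sig = i * rho] (mod int p)"
  by (rule cof[where A = "0" and B = "-h"]) (simp add: rho_def sig_def algebra_simps power2_eq_square)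

lemma G_fact: "[G t = 2 * (t - rho) * (t - sig)] (mod int p)"
  by (rule cof[where A = "-1 - 2*h - 2*t" and B = "2*h^2"])
     (simp add: G_def rho_def sig_def algebra_simps power2_eq_square)

lemma pm2: "p - 2 \<ge> 1" using p_ge5 by simp

lemma zpow: "[x = 0] (mod int p) \<Longrightarrow> [x ^ (p - 2) = 0] (mod int p)"
proof -
  assume "[x = 0] (mod int p)"
  then have "[x ^ (p - 2) = 0 ^ (p - 2)] (mod int p)" by (rule cong_pow)
  moreover have "(0::int) ^ (p - 2) = 0" using pm2 by simp
  ultimately show ?thesis by simp
qed

lemma dvd_cong: "int p dvd LL - RR \<Longrightarrow> [LL = RR] (mod int p)" by (simp add: cong_iff_dvd_diff)

lemma PF:
  "[G t ^ (p - 2) = (-i*h) * ((t - rho) ^ (p - 2) - (t - sig) ^ (p - 2))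
       - h * ((if [t = rho] (mod int p) then 1 else 0) + (if [t = sig] (mod int p) then 1 else 0))] (mod int p)"
proof -
  have ne: "\<not> [rho = sig] (mod int p)"
  proof
    assume "[rho = sig] (mod int p)"
    then have "[rho - sig = 0] (mod int p)" by (simp add: cong_iff_dvd_diff)
    then have "[i = 0] (mod int p)" using rho_sig by (metis cong_sym cong_trans)
    then show False using i_nd by (simp add: cong_0_iff)
  qed
  consider (R) "[t = rho] (mod int p)" | (S) "[t = sig] (mod int p)"
    | (O) "\<not> [t = rho] (mod int p)" "\<not> [t = sig] (mod int p)" by blast
  then show ?thesis
  proof cases
    case R
    then have nS: "\<not> [t = sig] (mod int p)" using ne by (metis cong_sym cong_trans)
    have x0: "[t - rho = 0] (mod int p)" using R by (simp add: cong_iff_dvd_diff)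
    have g0: "[G t = 0] (mod int p)"
    proof -
      have "[2 * (t - rho) * (t - sig) = 2 * 0 * (t - sig)] (mod int p)"
        using x0 by (intro cong_mult cong_refl)
      then show ?thesis using G_fact by (metis cong_trans mult_zero_left mult_zero_right)
    qed
    have y: "[t - sig = i] (mod int p)"
    proof -
      have "[t - sig = rho - sig] (mod int p)" using R by (intro cong_diff cong_refl)
      then show ?thesis using rho_sig cong_trans by blast
    qed
    have "[(t - sig) ^ (p - 2) = i ^ (p - 2)] (mod int p)" using y by (rule cong_pow)
    moreover have "[(t - rho) ^ (p - 2) = 0] (mod int p)" using x0 by (rule zpow)
    ultimately have "[(-i*h) * ((t - rho) ^ (p - 2) - (t - sig) ^ (p - 2)) - h * (1 + 0)
        = (-i*h) * (0 - i ^ (p - 2)) - h * (1 + 0)] (mod int p)"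
      by (intro cong_diff cong_mult cong_refl)
    moreover have "[(-i*h) * (0 - i ^ (p - 2)) - h * (1 + 0) = 0] (mod int p)"
    proof -
      have "(-i*h) * (0 - i ^ (p - 2)) - h * (1 + 0) - 0 = h * (i * i ^ (p - 2) - 1)"
        by (simp add: algebra_simps)
      moreover have "int p dvd i * i ^ (p - 2) - 1" using inv_pow[OF i_nd] by (simp add: cong_iff_dvd_diff)
      ultimately show ?thesis by (intro dvd_cong) simp
    qed
    moreover have "[G t ^ (p - 2) = 0] (mod int p)" using g0 by (rule zpow)
    ultimately show ?thesis using R nS by (simp, meson cong_sym cong_trans)
  next
    case S
    then have nR: "\<not> [t = rho] (mod int p)" using ne by (metis cong_sym cong_trans)
    have y0: "[t - sig = 0] (mod int p)" using S by (simp add: cong_iff_dvd_diff)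
    have g0: "[G t = 0] (mod int p)"
    proof -
      have "[2 * (t - rho) * (t - sig) = 2 * (t - rho) * 0] (mod int p)"
        using y0 by (intro cong_mult cong_refl)
      then show ?thesis using G_fact by (metis cong_trans mult_zero_right)
    qed
    have x: "[t - rho = -i] (mod int p)"
    proof -
      have "[t - rho = sig - rho] (mod int p)" using S by (intro cong_diff cong_refl)
      moreover have "[sig - rho = -i] (mod int p)" using rho_sig
        by (metis cong_minus_minus_iff minus_diff_eq)
      ultimately show ?thesis using cong_trans by blast
    qed
    have "[(t - rho) ^ (p - 2) = (-i) ^ (p - 2)] (mod int p)" using x by (rule cong_pow)
    moreover have "[(t - sig) ^ (p - 2) = 0] (mod int p)" using y0 by (rule zpow)
    ultimately have "[(-i*h) * ((t - rho) ^ (p - 2) - (t - sig) ^ (p - 2)) - h * (0 + 1)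
        = (-i*h) * ((-i) ^ (p - 2) - 0) - h * (0 + 1)] (mod int p)"
      by (intro cong_diff cong_mult cong_refl)
    moreover have "[(-i*h) * ((-i) ^ (p - 2) - 0) - h * (0 + 1) = 0] (mod int p)"
    proof -
      have "(-i*h) * ((-i) ^ (p - 2) - 0) - h * (0 + 1) - 0 = h * ((-i) * (-i) ^ (p - 2) - 1)"
        by (simp add: algebra_simps)
      moreover have "\<not> int p dvd -i" using i_nd by simp
      then have "[(-i) * (-i) ^ (p - 2) = 1] (mod int p)" by (rule inv_pow)
      then have "int p dvd (-i) * (-i) ^ (p - 2) - 1" unfolding cong_iff_dvd_diff .
      ultimately show ?thesis by (intro dvd_cong) simp
    qed
    moreover have "[G t ^ (p - 2) = 0] (mod int p)" using g0 by (rule zpow)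
    ultimately show ?thesis using S nR by (simp, meson cong_sym cong_trans)
  next
    case O
    define x where "x = t - rho"
    define y where "y = t - sig"
    define X where "X = x ^ (p - 2)"
    define Y where "Y = y ^ (p - 2)"
    define Z where "Z = (2::int) ^ (p - 2)"
    have xnd: "\<not> int p dvd x" using O(1) unfolding x_def by (simp add: cong_iff_dvd_diff)
    have ynd: "\<not> int p dvd y" using O(2) unfolding y_def by (simp add: cong_iff_dvd_diff)
    have dx: "int p dvd x * X - 1" using inv_pow[OF xnd] unfolding X_def by (simp add: cong_iff_dvd_diff)
    have dy: "int p dvd y * Y - 1" using inv_pow[OF ynd] unfolding Y_def by (simp add: cong_iff_dvd_diff)
    have dz: "int p dvd 2 * Z - 1" using inv_pow[OF two_nd] unfolding Z_def by (simp add: cong_iff_dvd_diff)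
    have "[G t ^ (p - 2) = (2 * x * y) ^ (p - 2)] (mod int p)"
      using G_fact unfolding x_def y_def by (rule cong_pow)
    moreover have "(2 * x * y) ^ (p - 2) = Z * X * Y"
      unfolding X_def Y_def Z_def by (simp add: power_mult_distrib)
    moreover have "[Z * X * Y = (-i*h) * (X - Y)] (mod int p)"
    proof (rule dvd_cong)
      have "Z * X * Y - (-i*h) * (X - Y) =
          (2*h - 1) * (-(X*Y*Z)) + (2*Z - 1) * (X*Y*h) + (2*h - 1) * (-(X*Y*h)) + (i^2 + 1) * (X*Y*2*h^2)
          + (y*Y - 1) * (- i*h*X) + (x*X - 1) * (i*h*Y)"
        unfolding x_def y_def rho_def sig_def by (simp add: algebra_simps power2_eq_square)
      moreover have "int p dvd (2*h - 1) * (-(X*Y*Z)) + (2*Z - 1) * (X*Y*h) + (2*h - 1) * (-(X*Y*h)) + (i^2 + 1) * (X*Y*2*h^2)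
          + (y*Y - 1) * (- i*h*X) + (x*X - 1) * (i*h*Y)"
        by (rule dvd_add[OF comb5[OF h2 dz h2 i2 dy] dvd_mult2[OF dx]])
      ultimately show "int p dvd Z * X * Y - (-i*h) * (X - Y)" by simp
    qed
    ultimately have "[G t ^ (p - 2) = (-i*h) * (X - Y)] (mod int p)" by (metis cong_trans)
    then show ?thesis using O unfolding X_def Y_def x_def y_def by simp
  qed
qed

end

context L2 begin

definition "mu k = (\<Sum>t\<in>{1..int p - 1}. t ^ k * G t ^ (p - 2))"

definition "Bf k = (if k = 0 then 2*(1-i) else if k mod 4 = 0 then (1-i)*(1 - int k)
   else if k mod 4 = 1 then -rho*(1+i) else if k mod 4 = 2 then (1+i)*int k else i*(2*int k - 1))"

lemma sum_ind:
  assumes a: "\<not> int p dvd a"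
  shows "[(\<Sum>t\<in>{1..int p - 1}. t ^ k * (if [t = a] (mod int p) then 1 else 0)) = a ^ k] (mod int p)"
proof -
  have am: "a mod int p \<in> {1..int p - 1}"
  proof -
    have "a mod int p \<noteq> 0" using a by (simp add: dvd_eq_mod_eq_0)
    moreover have "a mod int p \<ge> 0" "a mod int p < int p" using p_ge5 by auto
    ultimately show ?thesis by auto
  qed
  have "(\<Sum>t\<in>{1..int p - 1}. t ^ k * (if [t = a] (mod int p) then 1 else 0)) =
        (\<Sum>t\<in>{1..int p - 1}. if t = a mod int p then t ^ k else 0)"
  proof (rule sum.cong)
    fix t assume t: "t \<in> {1..int p - 1}"
    then have "t mod int p = t" by auto
    then have "[t = a] (mod int p) \<longleftrightarrow> t = a mod int p" by (simp add: cong_def)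
    then show "t ^ k * (if [t = a] (mod int p) then 1 else 0) = (if t = a mod int p then t ^ k else 0)"
      by simp
  qed simp
  also have "\<dots> = (a mod int p) ^ k" using am by (simp add: sum.delta')
  finally show ?thesis by (simp add: cong_def power_mod)
qed

lemma mu_A:
  "[mu k = (-i*h) * ((\<Sum>t\<in>{1..int p - 1}. t ^ k * (t - rho) ^ (p - 2)) - (\<Sum>t\<in>{1..int p - 1}. t ^ k * (t - sig) ^ (p - 2)))
      - h * (rho ^ k + sig ^ k)] (mod int p)"
proof -
  define ir where "ir t = (if [t = rho] (mod int p) then 1 else (0::int))" for t
  define isg where "isg t = (if [t = sig] (mod int p) then 1 else (0::int))" for t
  have "[mu k = (\<Sum>t\<in>{1..int p - 1}. t ^ k * ((-i*h) * ((t - rho) ^ (p - 2) - (t - sig) ^ (p - 2)) - h * (ir t + isg t)))] (mod int p)"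
    unfolding mu_def ir_def isg_def by (intro cong_sum cong_mult cong_refl PF)
  also have "(\<Sum>t\<in>{1..int p - 1}. t ^ k * ((-i*h) * ((t - rho) ^ (p - 2) - (t - sig) ^ (p - 2)) - h * (ir t + isg t)))
    = (-i*h) * ((\<Sum>t\<in>{1..int p - 1}. t ^ k * (t - rho) ^ (p - 2)) - (\<Sum>t\<in>{1..int p - 1}. t ^ k * (t - sig) ^ (p - 2)))
      - h * ((\<Sum>t\<in>{1..int p - 1}. t ^ k * ir t) + (\<Sum>t\<in>{1..int p - 1}. t ^ k * isg t))"
  proof -
    have "(\<Sum>t\<in>{1..int p - 1}. t ^ k * ((-i*h) * ((t - rho) ^ (p - 2) - (t - sig) ^ (p - 2)) - h * (ir t + isg t)))
      = (\<Sum>t\<in>{1..int p - 1}. (-i*h) * (t ^ k * (t - rho) ^ (p - 2)) - (-i*h) * (t ^ k * (t - sig) ^ (p - 2))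
           - (h * (t ^ k * ir t) + h * (t ^ k * isg t)))"
      by (rule sum.cong) (simp_all add: algebra_simps)
    also have "\<dots> = (-i*h) * (\<Sum>t\<in>{1..int p - 1}. t ^ k * (t - rho) ^ (p - 2)) - (-i*h) * (\<Sum>t\<in>{1..int p - 1}. t ^ k * (t - sig) ^ (p - 2))
           - (h * (\<Sum>t\<in>{1..int p - 1}. t ^ k * ir t) + h * (\<Sum>t\<in>{1..int p - 1}. t ^ k * isg t))"
      by (simp only: sum_subtractf sum.distrib sum_distrib_left)
    finally show ?thesis by (simp add: algebra_simps)
  qed
  also have "[\<dots> = (-i*h) * ((\<Sum>t\<in>{1..int p - 1}. t ^ k * (t - rho) ^ (p - 2)) - (\<Sum>t\<in>{1..int p - 1}. t ^ k * (t - sig) ^ (p - 2)))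
      - h * (rho ^ k + sig ^ k)] (mod int p)"
    unfolding ir_def isg_def by (intro cong_diff cong_mult cong_add cong_refl sum_ind rho_nd sig_nd)
  finally show ?thesis .
qed

lemma Uv_cong:
  assumes "k < p - 1"
  shows "[(\<Sum>s\<in>{1..int p - 1}. s ^ k * (s - 1) ^ (p - 2)) = (if k = 0 then 1 else - int k)] (mod int p)"
  using U_sum[OF assms] .

lemma ipow: "[i ^ n = i ^ (n mod 4)] (mod int p)"
proof -
  have i4: "[i ^ 4 = 1] (mod int p)"
    by (rule cof[where A = "0" and B = "i^2 - 1"]) (simp add: algebra_simps power2_eq_square power4_eq_xxxx)
  have "i ^ n = i ^ (4 * (n div 4) + n mod 4)" by simp
  also have "\<dots> = (i ^ 4) ^ (n div 4) * i ^ (n mod 4)" by (simp only: power_add power_mult)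
  finally have "i ^ n = (i ^ 4) ^ (n div 4) * i ^ (n mod 4)" .
  moreover have "[(i ^ 4) ^ (n div 4) * i ^ (n mod 4) = 1 ^ (n div 4) * i ^ (n mod 4)] (mod int p)"
    using i4 by (intro cong_mult cong_pow cong_refl)
  ultimately show ?thesis by simp
qed

lemma rho_pow: "[rho ^ k = rho ^ (k + (p - 2)) * rho] (mod int p)"
proof -
  have pp: "p - 1 = Suc (p - 2)" using p_ge5 by simp
  have "rho ^ (k + (p - 2)) * rho = rho ^ k * rho ^ (p - 1)"
    unfolding pp by (simp add: power_add algebra_simps)
  moreover have "[rho ^ k * rho ^ (p - 1) = rho ^ k * 1] (mod int p)"
    using fermat_int[OF rho_nd] by (intro cong_mult cong_refl)
  ultimately show ?thesis by (simp add: cong_sym)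
qed

lemma sig_pow: "[sig ^ m = i ^ m * rho ^ m] (mod int p)"
proof -
  have "[sig ^ m = (i * rho) ^ m] (mod int p)" using sig_i by (rule cong_pow)
  then show ?thesis by (simp add: power_mult_distrib)
qed

lemma pm2_mod: "(p - 2) mod 4 = 3"
proof -
  define q where "q = p div 4"
  have pq: "p = 4 * q + 1" using p4 unfolding q_def by (metis div_mult_mod_eq mult.commute)
  then have "q \<ge> 1" using p_ge5 by simp
  then have "p - 2 = 4 * (q - 1) + 3" using pq by simp
  then show ?thesis by simp
qed

lemma bracket:
  fixes Uv :: int
  assumes k: "k < p - 1" and U: "Uv = (if k = 0 then 1 else - int k)"
  shows "[(-i*h) * (1 - i ^ ((k + (p - 2)) mod 4)) * Uv - h * (rho + i ^ (k mod 4) * rho) = h * Bf k] (mod int p)"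
proof -
  have a: "(k + (p - 2)) mod 4 = (k mod 4 + 3) mod 4"
    using mod_add_eq[of k 4 "p - 2", symmetric] pm2_mod by simp
  have "k mod 4 < 4" by simp
  then have "k mod 4 = 0 \<or> k mod 4 = 1 \<or> k mod 4 = 2 \<or> k mod 4 = 3" by linarith
  then consider (z) "k = 0" | (c0) "k \<noteq> 0" "k mod 4 = 0" | (c1) "k mod 4 = 1" | (c2) "k mod 4 = 2" | (c3) "k mod 4 = 3"
    by (cases "k = 0") auto
  then show ?thesis
  proof cases
    case z
    then show ?thesis unfolding a U Bf_def
      by (intro cof[where A = "h - i*h" and B = "-h + i^2*h"]) (simp add: rho_def algebra_simps power2_eq_square power3_eq_cube)
  next
    case c0
    then show ?thesis unfolding a U Bf_def
      by (intro cof[where A = "h - i*h" and B = "h*int k - i^2*h*int k"]) (simp add: rho_def algebra_simps power2_eq_square power3_eq_cube)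
  next
    case c1
    then have "k \<noteq> 0" by auto
    with c1 show ?thesis unfolding a U Bf_def
      by (intro cof[where A = "0" and B = "0"]) (simp add: rho_def algebra_simps power2_eq_square power3_eq_cube)
  next
    case c2
    then have "k \<noteq> 0" by auto
    with c2 show ?thesis unfolding a U Bf_def
      by (intro cof[where A = "0" and B = "-h*int k + h^2 - i*h^2"]) (simp add: rho_def algebra_simps power2_eq_square power3_eq_cube)
  next
    case c3
    then have "k \<noteq> 0" by auto
    with c3 show ?thesis unfolding a U Bf_def
      by (intro cof[where A = "-i*h" and B = "h^2 - i*h*int k + i*h^2 - i^2*h^2"]) (simp add: rho_def algebra_simps power2_eq_square power3_eq_cube)
  qed
qed

lemma mu_closed:
  assumes k: "k < p - 1"
  shows "[mu k = h * rho ^ (k + (p - 2)) * Bf k] (mod int p)"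
proof -
  define R where "R = rho ^ (k + (p - 2))"
  define Uv where "Uv = (if k = 0 then 1 else - int k)"
  define a where "a = (k + (p - 2)) mod 4"
  define b where "b = k mod 4"
  have f1: "[(\<Sum>t\<in>{1..int p - 1}. t ^ k * (t - rho) ^ (p - 2)) = R * Uv] (mod int p)"
  proof -
    have "[(\<Sum>t\<in>{1..int p - 1}. t ^ k * (t - rho) ^ (p - 2)) = R * (\<Sum>s\<in>{1..int p - 1}. s ^ k * (s - 1) ^ (p - 2))] (mod int p)"
      unfolding R_def by (rule W_sum[OF rho_nd])
    also have "[R * (\<Sum>s\<in>{1..int p - 1}. s ^ k * (s - 1) ^ (p - 2)) = R * Uv] (mod int p)"
      unfolding Uv_def using U_sum[OF k] by (intro cong_mult cong_refl)
    finally show ?thesis .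
  qed
  have f2: "[(\<Sum>t\<in>{1..int p - 1}. t ^ k * (t - sig) ^ (p - 2)) = (i ^ a * R) * Uv] (mod int p)"
  proof -
    have "[(\<Sum>t\<in>{1..int p - 1}. t ^ k * (t - sig) ^ (p - 2)) = sig ^ (k + (p - 2)) * (\<Sum>s\<in>{1..int p - 1}. s ^ k * (s - 1) ^ (p - 2))] (mod int p)"
      by (rule W_sum[OF sig_nd])
    also have "[sig ^ (k + (p - 2)) * (\<Sum>s\<in>{1..int p - 1}. s ^ k * (s - 1) ^ (p - 2)) = (i ^ a * R) * Uv] (mod int p)"
    proof (rule cong_mult)
      have "[sig ^ (k + (p - 2)) = i ^ (k + (p - 2)) * R] (mod int p)" unfolding R_def by (rule sig_pow)
      also have "[i ^ (k + (p - 2)) * R = i ^ a * R] (mod int p)" unfolding a_def by (intro cong_mult cong_refl ipow)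
      finally show "[sig ^ (k + (p - 2)) = i ^ a * R] (mod int p)" .
      show "[(\<Sum>s\<in>{1..int p - 1}. s ^ k * (s - 1) ^ (p - 2)) = Uv] (mod int p)"
        unfolding Uv_def by (rule U_sum[OF k])
    qed
    finally show ?thesis .
  qed
  have f3: "[rho ^ k = R * rho] (mod int p)" unfolding R_def by (rule rho_pow)
  have f4: "[sig ^ k = i ^ b * (R * rho)] (mod int p)"
  proof -
    have "[sig ^ k = i ^ k * rho ^ k] (mod int p)" by (rule sig_pow)
    also have "[i ^ k * rho ^ k = i ^ b * (R * rho)] (mod int p)"
      unfolding b_def using f3 by (intro cong_mult ipow)
    finally show ?thesis .
  qed
  have "[mu k = (-i*h) * (R * Uv - (i ^ a * R) * Uv) - h * (R * rho + i ^ b * (R * rho))] (mod int p)"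
  proof -
    note mu_A[of k]
    also have "[(-i*h) * ((\<Sum>t\<in>{1..int p - 1}. t ^ k * (t - rho) ^ (p - 2)) - (\<Sum>t\<in>{1..int p - 1}. t ^ k * (t - sig) ^ (p - 2)))
      - h * (rho ^ k + sig ^ k) = (-i*h) * (R * Uv - (i ^ a * R) * Uv) - h * (R * rho + i ^ b * (R * rho))] (mod int p)"
      using f1 f2 f3 f4 by (intro cong_diff cong_mult cong_add cong_refl)
    finally show ?thesis .
  qed
  also have "(-i*h) * (R * Uv - (i ^ a * R) * Uv) - h * (R * rho + i ^ b * (R * rho))
      = R * ((-i*h) * (1 - i ^ a) * Uv - h * (rho + i ^ b * rho))"
    by (simp add: algebra_simps)
  also have "[R * ((-i*h) * (1 - i ^ a) * Uv - h * (rho + i ^ b * rho)) = R * (h * Bf k)] (mod int p)"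
    unfolding a_def b_def using bracket[OF k Uv_def] by (intro cong_mult cong_refl)
  finally show ?thesis unfolding R_def by (simp add: algebra_simps)
qed

end

lemma mult_entry:
  assumes "A \<in> carrier_mat n m" "B \<in> carrier_mat m l" "x < n" "y < l"
  shows "(A * B) $$ (x, y) = (\<Sum>j<m. A $$ (x, j) * B $$ (j, y))"
  using assms by (simp add: scalar_prod_def atLeast0LessThan)

lemma det_cong:
  fixes A B :: "int mat"
  assumes A: "A \<in> carrier_mat n n" and B: "B \<in> carrier_mat n n"
    and c: "\<And>x y. x < n \<Longrightarrow> y < n \<Longrightarrow> [A $$ (x, y) = B $$ (x, y)] (mod m)"
  shows "[det A = det B] (mod m)"
  unfolding det_def'[OF A] det_def'[OF B]
proof (rule cong_sum, rule cong_mult[OF cong_refl], rule cong_prod)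
  fix q x assume q: "q \<in> {q. q permutes {0..<n}}" and x: "x \<in> {0..<n}"
  then have "q x < n" using permutes_in_image[of q "{0..<n}" x] by auto
  then show "[A $$ (x, q x) = B $$ (x, q x)] (mod m)" using c x by auto
qed

lemma det_diag:
  fixes f :: "nat \<Rightarrow> int"
  shows "det (mat n n (\<lambda>(x, y). if x = y then f x else 0)) = (\<Prod>x<n. f x)"
proof -
  have "det (mat n n (\<lambda>(x, y). if x = y then f x else 0)) = prod_list (diag_mat (mat n n (\<lambda>(x, y). if x = y then f x else 0)))"
    by (rule det_upper_triangular[of _ n]) auto
  also have "\<dots> = (\<Prod>x<n. f x)" unfolding prod_list_diag_prod by (simp add: atLeast0LessThan)
  finally show ?thesis .
qed

context L begin

lemma p4q: "p = 4 * (p div 4) + 1" using p4 by (metis div_mult_mod_eq mult.commute)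

lemma even_N: "even (p - 1)"
proof -
  have "p - 1 = 2 * (2 * (p div 4))" using p4q by linarith
  then show ?thesis by simp
qed

definition "muD k = (\<Sum>t\<in>{1..int p - 1}. t ^ k * (1 + 2*t + 2*t^2) ^ (p - 2))"

lemma sum_nat_to_int: "(\<Sum>j<p - 1. f (int j + 1)) = (\<Sum>t\<in>{1..int p - 1}. f t)"
  by (rule sum.reindex_bij_witness[of _ "\<lambda>t. nat (t - 1)" "\<lambda>j. int j + 1"]) auto

definition "Cm = mat (p - 1) (p - 1) (\<lambda>(x, k). int (x + 1) ^ k)"
definition "Em = mat (p - 1) (p - 1) (\<lambda>(k, y). int (y + 1) ^ (p - 1 - k))"
definition "Dg = mat (p - 1) (p - 1) (\<lambda>(x, y). if x = y then int (x + 1) ^ (p - 3) else 0)"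
definition "Dmu = mat (p - 1) (p - 1) (\<lambda>(x, y). if x = y then muD x else 0)"

lemma carriers: "Dmat p \<in> carrier_mat (p - 1) (p - 1)" "Cm \<in> carrier_mat (p - 1) (p - 1)"
  "Em \<in> carrier_mat (p - 1) (p - 1)" "Dg \<in> carrier_mat (p - 1) (p - 1)" "Dmu \<in> carrier_mat (p - 1) (p - 1)"
  unfolding Dmat_def Cm_def Em_def Dg_def Dmu_def by auto

lemma CE_entry:
  assumes x: "x < p - 1" and y: "y < p - 1"
  shows "[(Cm * Em) $$ (x, y) = (if x = y then -1 else 0)] (mod int p)"
proof -
  define a where "a = int (x + 1)"
  define b where "b = int (y + 1)"
  have "(Cm * Em) $$ (x, y) = (\<Sum>k<p - 1. Cm $$ (x, k) * Em $$ (k, y))"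
    by (rule mult_entry[OF carriers(2,3) x y])
  also have "\<dots> = (\<Sum>k<p - 1. a ^ k * b ^ (p - 1 - k))"
    by (rule sum.cong) (use x y in \<open>auto simp: Cm_def Em_def a_def b_def\<close>)
  also have "[\<dots> = (if x = y then -1 else 0)] (mod int p)"
  proof (cases "x = y")
    case True
    have and0: "\<not> int p dvd a" using not_dvd_range[of a] x unfolding a_def by auto
    have "[(\<Sum>k<p - 1. a ^ k * b ^ (p - 1 - k)) = (\<Sum>k<p - 1. 1)] (mod int p)"
    proof (rule cong_sum)
      fix k assume "k \<in> {..<p - 1}"
      then have "a ^ k * b ^ (p - 1 - k) = a ^ (p - 1)" using True unfolding a_def b_def
        by (simp flip: power_add)
      then show "[a ^ k * b ^ (p - 1 - k) = 1] (mod int p)" using fermat_int[OF and0] by simp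
    qed
    moreover have "(\<Sum>k<p - 1. (1::int)) = int p - 1" using p_ge5 by simp
    moreover have "[int p - 1 = -1] (mod int p)" by (simp add: cong_iff_dvd_diff)
    ultimately show ?thesis using True cong_trans by auto
  next
    case False
    have and0: "\<not> int p dvd a" using not_dvd_range[of a] x unfolding a_def by auto
    have bnd: "\<not> int p dvd b" using not_dvd_range[of b] y unfolding b_def by auto
    have abnd: "\<not> int p dvd a - b"
    proof
      assume "int p dvd a - b"
      moreover have "a - b \<noteq> 0" using False unfolding a_def b_def by simp
      ultimately have "\<bar>int p\<bar> \<le> \<bar>a - b\<bar>" using dvd_imp_le_int by blast
      moreover have "\<bar>a - b\<bar> < int p" using x y unfolding a_def b_def by auto
      ultimately show False by simp
    qed
    define S where "S = (\<Sum>k<p - 1. b ^ (p - 1 - Suc k) * a ^ k)"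
    have "a ^ (p - 1) - b ^ (p - 1) = (a - b) * S" unfolding S_def by (rule power_diff_sumr2)
    moreover have "[a ^ (p - 1) - b ^ (p - 1) = 1 - 1] (mod int p)"
      using fermat_int[OF and0] fermat_int[OF bnd] by (rule cong_diff)
    ultimately have "int p dvd (a - b) * S" by (simp add: cong_0_iff)
    then have "int p dvd S" using abnd prime_dvd_mult_int by blast
    moreover have "(\<Sum>k<p - 1. a ^ k * b ^ (p - 1 - k)) = b * S"
      unfolding S_def sum_distrib_left
    proof (rule sum.cong)
      fix k assume "k \<in> {..<p - 1}"
      then have "p - 1 - k = Suc (p - 1 - Suc k)" by simp
      then show "a ^ k * b ^ (p - 1 - k) = b * (b ^ (p - 1 - Suc k) * a ^ k)" by simp
    qed simp
    ultimately show ?thesis using False by (simp add: cong_0_iff)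
  qed
  finally show ?thesis .
qed

lemma detC_nd: "\<not> int p dvd det Cm"
proof -
  have "[det (Cm * Em) = det (mat (p - 1) (p - 1) (\<lambda>(x, y). if x = y then -1 else (0::int)))] (mod int p)"
    by (rule det_cong[of _ "p - 1"]) (use carriers CE_entry in auto)
  moreover have "det (mat (p - 1) (p - 1) (\<lambda>(x, y). if x = y then -1 else (0::int))) = 1"
  proof -
    have "det (mat (p - 1) (p - 1) (\<lambda>(x, y). if x = y then -1 else (0::int))) = (\<Prod>x<p - 1. -1)"
      by (rule det_diag)
    also have "\<dots> = (-1) ^ (p - 1)" by simp
    also have "\<dots> = 1"
      using even_N by simp
    finally show ?thesis .
  qed
  moreover have "det (Cm * Em) = det Cm * det Em" by (rule det_mult[OF carriers(2,3)])
  ultimately have "[det Cm * det Em = 1] (mod int p)" by simp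
  show ?thesis
  proof
    assume "int p dvd det Cm"
    then have "[det Cm * det Em = 0] (mod int p)" by (simp add: cong_0_iff)
    then have "[1 = 0] (mod int p)" using \<open>[det Cm * det Em = 1] (mod int p)\<close> by (metis cong_sym cong_trans)
    then show False using p_ge5 by (simp add: cong_0_iff)
  qed
qed

end

lemma prod_int_fact: "(\<Prod>x<n. int (x + 1)) = fact n"
  by (induction n) (simp_all add: algebra_simps)

context L begin

lemma Dg_mult:
  assumes M: "M \<in> carrier_mat (p - 1) (p - 1)" and x: "x < p - 1" and y: "y < p - 1"
  shows "(Dg * M) $$ (x, y) = int (x + 1) ^ (p - 3) * M $$ (x, y)"
proof -
  have "(Dg * M) $$ (x, y) = (\<Sum>l<p - 1. Dg $$ (x, l) * M $$ (l, y))"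
    by (rule mult_entry[OF carriers(4) M x y])
  also have "\<dots> = (\<Sum>l<p - 1. if l = x then int (x + 1) ^ (p - 3) * M $$ (l, y) else 0)"
    by (rule sum.cong) (use x in \<open>auto simp: Dg_def\<close>)
  also have "\<dots> = int (x + 1) ^ (p - 3) * M $$ (x, y)" using x by (simp add: sum.delta)
  finally show ?thesis .
qed

lemma Dmu_mult:
  assumes M: "M \<in> carrier_mat (p - 1) (p - 1)" and x: "x < p - 1" and y: "y < p - 1"
  shows "(M * Dmu) $$ (x, y) = M $$ (x, y) * muD y"
proof -
  have "(M * Dmu) $$ (x, y) = (\<Sum>l<p - 1. M $$ (x, l) * Dmu $$ (l, y))"
    by (rule mult_entry[OF M carriers(5) x y])
  also have "\<dots> = (\<Sum>l<p - 1. if l = y then M $$ (x, y) * muD y else 0)"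
    by (rule sum.cong) (use y in \<open>auto simp: Dmu_def\<close>)
  also have "\<dots> = M $$ (x, y) * muD y" using y by (simp add: sum.delta)
  finally show ?thesis .
qed

lemma AC_entry:
  assumes x: "x < p - 1" and k: "k < p - 1"
  shows "[(Dmat p * Cm) $$ (x, k) = (Dg * Cm * Dmu) $$ (x, k)] (mod int p)"
proof -
  define a where "a = int (x + 1)"
  have and0: "\<not> int p dvd a" using not_dvd_range[of a] x unfolding a_def by auto
  define F where "F t = (a^2 + 2 * a * t + 2 * t^2) ^ (p - 2) * t ^ k" for t
  have "(Dmat p * Cm) $$ (x, k) = (\<Sum>j<p - 1. Dmat p $$ (x, j) * Cm $$ (j, k))"
    by (rule mult_entry[OF carriers(1,2) x k])
  also have "\<dots> = (\<Sum>j<p - 1. F (int j + 1))"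
    by (rule sum.cong) (use x k in \<open>auto simp: Dmat_def Cm_def F_def a_def add.commute\<close>)
  also have "\<dots> = (\<Sum>t\<in>{1..int p - 1}. F t)" by (rule sum_nat_to_int)
  also have "\<dots> = (\<Sum>s\<in>{1..int p - 1}. F ((a * s) mod int p))" by (rule reindex_sum[OF and0])
  also have "[\<dots> = (\<Sum>s\<in>{1..int p - 1}. F (a * s))] (mod int p)"
    unfolding F_def by (intro cong_sum cong_mult cong_pow cong_add cong_refl) (auto simp: cong_def)
  also have "(\<Sum>s\<in>{1..int p - 1}. F (a * s)) = a ^ (2 * (p - 2) + k) * muD k"
  proof -
    have "F (a * s) = a ^ (2 * (p - 2) + k) * (s ^ k * (1 + 2*s + 2*s^2) ^ (p - 2))" for s
    proof -
      have eq: "a^2 + 2 * a * (a * s) + 2 * (a * s)^2 = a^2 * (1 + 2*s + 2*s^2)"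
        by (simp add: algebra_simps power2_eq_square)
      have a2: "(a^2) ^ (p - 2) = a ^ (2 * (p - 2))" by (simp add: power_mult)
      have "F (a * s) = (a^2 * (1 + 2*s + 2*s^2)) ^ (p - 2) * (a * s) ^ k" unfolding F_def eq ..
      also have "\<dots> = (a^2) ^ (p - 2) * a ^ k * (s ^ k * (1 + 2*s + 2*s^2) ^ (p - 2))"
        by (simp only: power_mult_distrib mult_ac)
      also have "\<dots> = a ^ (2 * (p - 2) + k) * (s ^ k * (1 + 2*s + 2*s^2) ^ (p - 2))"
        unfolding a2 by (simp only: power_add)
      finally show ?thesis .
    qed
    then show ?thesis unfolding muD_def by (simp add: sum_distrib_left)
  qed
  also have "[a ^ (2 * (p - 2) + k) * muD k = a ^ (p - 3) * a ^ k * muD k] (mod int p)"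
  proof -
    have e: "2 * (p - 2) + k = (p - 1) + ((p - 3) + k)" using p_ge5 by simp
    have "[a ^ (p - 1) * a ^ ((p - 3) + k) = 1 * a ^ ((p - 3) + k)] (mod int p)"
      using fermat_int[OF and0] by (intro cong_mult cong_refl)
    then have "[a ^ (2 * (p - 2) + k) = a ^ (p - 3) * a ^ k] (mod int p)"
      unfolding e by (simp add: power_add)
    then show ?thesis by (intro cong_mult cong_refl)
  qed
  also have "a ^ (p - 3) * a ^ k * muD k = (Dg * Cm * Dmu) $$ (x, k)"
  proof -
    have DC: "Dg * Cm \<in> carrier_mat (p - 1) (p - 1)" using carriers(2,4) by auto
    show ?thesis
      unfolding Dmu_mult[OF DC x k] Dg_mult[OF carriers(2) x k] using x k by (simp add: Cm_def a_def)
  qed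
  finally show ?thesis .
qed

lemma det_factor: "[det (Dmat p) = (\<Prod>k<p - 1. muD k)] (mod int p)"
proof -
  have DC: "Dg * Cm \<in> carrier_mat (p - 1) (p - 1)" using carriers(2,4) by auto
  have DCD: "Dg * Cm * Dmu \<in> carrier_mat (p - 1) (p - 1)" using DC carriers(5) by auto
  have AC: "Dmat p * Cm \<in> carrier_mat (p - 1) (p - 1)" using carriers(1,2) by auto
  have "[det (Dmat p * Cm) = det (Dg * Cm * Dmu)] (mod int p)"
    by (rule det_cong[OF AC DCD]) (rule AC_entry)
  moreover have "det (Dmat p * Cm) = det (Dmat p) * det Cm" by (rule det_mult[OF carriers(1,2)])
  moreover have "det (Dg * Cm * Dmu) = det Dg * det Cm * det Dmu"
    using det_mult[OF DC carriers(5)] det_mult[OF carriers(4,2)] by simp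
  moreover have "det Dmu = (\<Prod>k<p - 1. muD k)" unfolding Dmu_def by (rule det_diag)
  moreover have "[det Dg = 1] (mod int p)"
  proof -
    have "det Dg = (\<Prod>x<p - 1. int (x + 1) ^ (p - 3))" unfolding Dg_def by (rule det_diag)
    also have "\<dots> = (\<Prod>x<p - 1. int (x + 1)) ^ (p - 3)" by (rule prod_power_distrib[symmetric])
    also have "\<dots> = (fact (p - 1)) ^ (p - 3)" by (simp only: prod_int_fact)
    also have "[(fact (p - 1) :: int) ^ (p - 3) = (-1) ^ (p - 3)] (mod int p)"
      using wilson_theorem[OF prime] by (rule cong_pow)
    also have "(-1::int) ^ (p - 3) = 1"
    proof -
      have "p - 3 = 2 * (2 * (p div 4) - 1)" using p4q p_ge5 by linarith
      then show ?thesis by simp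
    qed
    finally show ?thesis .
  qed
  ultimately have "[det (Dmat p) * det Cm = 1 * det Cm * (\<Prod>k<p - 1. muD k)] (mod int p)"
    by (metis cong_mult cong_refl cong_trans)
  then have "int p dvd det Cm * (det (Dmat p) - (\<Prod>k<p - 1. muD k))"
    by (simp add: cong_iff_dvd_diff algebra_simps)
  then have "int p dvd det (Dmat p) - (\<Prod>k<p - 1. muD k)" using detC_nd prime_dvd_mult_int by blast
  then show ?thesis by (simp add: cong_iff_dvd_diff)
qed

end

lemma prod_split: "(\<Prod>q<a1 + b1. f q) = (\<Prod>q<a1. f q) * (\<Prod>q<b1. f (a1 + q))" for f :: "nat \<Rightarrow> int"
  by (induction b1) (simp_all add: algebra_simps)

lemma prod_rev: "(\<Prod>q<K. f q) = (\<Prod>q<K. f (K - 1 - q))" for f :: "nat \<Rightarrow> int"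
  by (rule prod.reindex_bij_witness[of _ "\<lambda>q. K - 1 - q" "\<lambda>q. K - 1 - q"]) auto

lemma prod_pow_sum: "(\<Prod>k<(n::nat). c ^ f k) = c ^ (\<Sum>k<n. f k)" for c :: int
  by (induction n) (simp_all add: power_add)

lemma two_sum: "2 * (\<Sum>k<n. k) = n * (n - 1::nat)"
proof (induction n)
  case (Suc n) then show ?case by (cases n) (auto simp: algebra_simps)
qed simp

context L2 begin

lemma mu_eq: "muD k = mu k" unfolding muD_def mu_def G_def ..

definition "Bq k = (if k mod 4 = 0 then (1-i)*(1 - int k) else if k mod 4 = 1 then -rho*(1+i)
   else if k mod 4 = 2 then (1+i)*int k else i*(2*int k - 1))"

lemma quad: "[Bq (4*q+1) * Bq (4*q+2) * Bq (4*q+3) * Bq (4*q+4) =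
   4 * rho^2 * ((4*int q + 2) * (4*int q + 3) * (8*int q + 5))] (mod int p)"
proof -
  have m: "(4*q+1) mod 4 = 1" "(4*q+2) mod 4 = 2" "(4*q+3) mod 4 = 3" "(4*q+4) mod 4 = 0" by presburger+
  have "Bq (4*q+1) * Bq (4*q+2) * Bq (4*q+3) * Bq (4*q+4) =
     (-rho*(1+i)) * ((1+i)*(4*int q+2)) * (i*(2*(4*int q+3) - 1)) * ((1-i)*(1 - (4*int q+4)))"
    unfolding Bq_def using m by simp
  also have "[\<dots> = 4 * rho^2 * ((4*int q + 2) * (4*int q + 3) * (8*int q + 5))] (mod int p)"
    by (rule cof[where A = "120*i*h + 592*i*h*(int q) + 960*i*h*(int q)^2 + 512*i*h*(int q)^3"
      and B = "(-120)*h^2 + (-592)*h^2*(int q) + (-960)*h^2*(int q)^2 + (-512)*h^2*(int q)^3 + 90*i*h + 444*i*h*(int q) + 720*i*h*(int q)^2 + 384*i*h*(int q)^3 + (-30)*i^3*h + (-148)*i^3*h*(int q) + (-240)*i^3*h*(int q)^2 + (-128)*i^3*h*(int q)^3"])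
      (unfold rho_def, simp add: algebra_simps power2_eq_square power3_eq_cube)
  finally show ?thesis .
qed

lemma prod_dvd_nd:
  fixes f :: "nat \<Rightarrow> int"
  assumes "\<And>q. q < n \<Longrightarrow> \<not> int p dvd f q"
  shows "\<not> int p dvd (\<Prod>q<n. f q)"
  using assms
proof (induction n)
  case 0 then show ?case using p_ge5 by simp
next
  case (Suc n)
  then have a: "\<not> int p dvd (\<Prod>q<n. f q)" by simp
  have b: "\<not> int p dvd f n" using Suc.prems by simp
  show ?case using a b prime_dvd_mult_int by auto
qed

lemma range_nd: "0 < x \<Longrightarrow> x < int p \<Longrightarrow> \<not> int p dvd x"
  using not_dvd_range[of x] by auto

lemma five_case:
  assumes p8: "p mod 8 = 5"
  shows "[det (Dmat p) = 0] (mod int p)"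
proof -
  define r where "r = p div 8"
  have pr: "p = 8 * r + 5" using p8 unfolding r_def by (metis div_mult_mod_eq mult.commute)
  define k0 where "k0 = 4 * r + 3"
  have k0: "k0 < p - 1" "k0 mod 4 = 3" "k0 \<noteq> 0" unfolding k0_def using pr by auto
  have "2 * int k0 - 1 = int p" unfolding k0_def using pr by simp
  then have "Bf k0 = i * int p" unfolding Bf_def using k0 by simp
  then have "[mu k0 = h * rho ^ (k0 + (p - 2)) * (i * int p)] (mod int p)" using mu_closed[OF k0(1)] by simp
  then have "int p dvd mu k0" by (simp add: cong_dvd_iff)
  then have "int p dvd muD k0" by (simp add: mu_eq)
  moreover have "muD k0 dvd (\<Prod>k<p - 1. muD k)" using k0(1) by (intro dvd_prodI) auto
  ultimately have "int p dvd (\<Prod>k<p - 1. muD k)" by (rule dvd_trans)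
  then show ?thesis using det_factor by (metis cong_0_iff cong_trans)
qed

end

lemma prod4: "prod g {m*4..<m*4+4} = g (4*m) * g (4*m+1) * g (4*m+2) * g (4*m+3)" for g :: "nat \<Rightarrow> int"
proof -
  have "{m*4..<m*4+4} = {4*m, 4*m+1, 4*m+2, 4*m+3}" by auto
  then show ?thesis by (simp add: algebra_simps)
qed

lemma prod_neg: "(\<Prod>q<n. - f q) = (-1) ^ n * (\<Prod>q<n. f q)" for f :: "nat \<Rightarrow> int"
  by (induction n) (simp_all add: algebra_simps)

context L2 begin

lemma one_case:
  assumes p8: "p mod 8 = 1"
  shows "\<exists>y. \<not> int p dvd y \<and> [det (Dmat p) = y^2] (mod int p)"
proof -
  define K where "K = p div 8"
  have pK: "p = 8 * K + 1" using p8 unfolding K_def by (metis div_mult_mod_eq mult.commute)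
  have K1: "K \<ge> 1" using pK p_ge5 by simp
  have N: "p - 1 = 8 * K" using pK by simp
  define M where "M = 2 * K"
  define S where "S = (\<Sum>k<p - 1. k + (p - 2))"
  define X where "X = (\<Prod>q<M. 4 * int q + 2)"
  define W where "W = (\<Prod>q<K. 8 * int q + 4)"
  have s1: "[(\<Prod>k<p - 1. muD k) = (\<Prod>k<p - 1. h * rho ^ (k + (p - 2)) * Bf k)] (mod int p)"
  proof (rule cong_prod)
    fix k assume "k \<in> {..<p - 1}"
    then have "k < p - 1" by simp
    then show "[muD k = h * rho ^ (k + (p - 2)) * Bf k] (mod int p)" unfolding mu_eq by (rule mu_closed)
  qed
  have s2: "(\<Prod>k<p - 1. h * rho ^ (k + (p - 2)) * Bf k) = h ^ (p - 1) * rho ^ S * (\<Prod>k<p - 1. Bf k)"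
    unfolding S_def by (simp add: prod.distrib prod_pow_sum)
  have s3: "[(\<Prod>k<p - 1. Bf k) = (\<Prod>k<p - 1. Bq (k + 1))] (mod int p)"
  proof -
    have NS: "p - 1 = Suc (8 * K - 1)" using N K1 by simp
    have a: "(\<Prod>k<p - 1. Bf k) = Bf 0 * (\<Prod>k<8 * K - 1. Bf (Suc k))"
      unfolding NS by (rule prod.lessThan_Suc_shift)
    have b0: "(\<Prod>k<p - 1. Bq (k + 1)) = (\<Prod>k<8 * K - 1. Bq (k + 1)) * Bq ((8 * K - 1) + 1)"
      unfolding NS by (rule prod.lessThan_Suc)
    have b1: "(8 * K - 1) + 1 = 8 * K" using K1 by simp
    have b: "(\<Prod>k<p - 1. Bq (k + 1)) = (\<Prod>k<8 * K - 1. Bq (Suc k)) * Bq (8 * K)"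
      using b0 unfolding b1 by simp
    have c: "(\<Prod>k<8 * K - 1. Bf (Suc k)) = (\<Prod>k<8 * K - 1. Bq (Suc k))"
      by (rule prod.cong) (auto simp: Bf_def Bq_def)
    have d: "[Bf 0 = Bq (8 * K)] (mod int p)"
    proof -
      have "Bq (8 * K) = (1 - i) * (1 - int (8 * K))" unfolding Bq_def by simp
      also have "(1 - i) * (1 - int (8 * K)) = (1 - i) * 2 - (1 - i) * int p" using pK by (simp add: algebra_simps)
      finally have "Bq (8 * K) = 2 * (1 - i) - (1 - i) * int p" by simp
      then show ?thesis unfolding Bf_def by (simp add: cong_iff_dvd_diff)
    qed
    show ?thesis unfolding a b c using d by (simp add: cong_mult cong_refl mult.commute)
  qed
  have s4: "(\<Prod>k<p - 1. Bq (k + 1)) = (\<Prod>q<M. Bq (4*q+1) * Bq (4*q+2) * Bq (4*q+3) * Bq (4*q+4))"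
  proof -
    have "(\<Prod>k<p - 1. Bq (k + 1)) = (\<Prod>q<M. prod (\<lambda>k. Bq (k + 1)) {q*4..<q*4+4})"
    proof -
      have e: "p - 1 = M * 4" unfolding M_def using N by simp
      show ?thesis unfolding e by (rule prod.nat_group[symmetric])
    qed
    also have "\<dots> = (\<Prod>q<M. Bq (4*q+1) * Bq (4*q+2) * Bq (4*q+3) * Bq (4*q+4))"
    proof (rule prod.cong)
      fix q
      show "prod (\<lambda>k. Bq (k + 1)) {q*4..<q*4+4} = Bq (4*q+1) * Bq (4*q+2) * Bq (4*q+3) * Bq (4*q+4)"
      proof -
        have e: "4*q+1+1 = 4*q+2" "4*q+2+1 = 4*q+3" "4*q+3+1 = 4*q+4" by simp_all
        show ?thesis by (subst prod4) (simp only: e)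
      qed
    qed simp
    finally show ?thesis .
  qed
  have s5: "[(\<Prod>q<M. Bq (4*q+1) * Bq (4*q+2) * Bq (4*q+3) * Bq (4*q+4)) =
      (4 * rho^2) ^ M * (X * ((\<Prod>q<M. 4 * int q + 3) * (\<Prod>q<M. 8 * int q + 5)))] (mod int p)"
  proof -
    have "[(\<Prod>q<M. Bq (4*q+1) * Bq (4*q+2) * Bq (4*q+3) * Bq (4*q+4)) =
      (\<Prod>q<M. 4 * rho^2 * ((4*int q + 2) * (4*int q + 3) * (8*int q + 5)))] (mod int p)"
      by (rule cong_prod) (rule quad)
    also have "(\<Prod>q<M. 4 * rho^2 * ((4*int q + 2) * (4*int q + 3) * (8*int q + 5))) =
       (4 * rho^2) ^ M * (X * ((\<Prod>q<M. 4 * int q + 3) * (\<Prod>q<M. 8 * int q + 5)))"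
      unfolding X_def by (simp add: prod.distrib)
    finally show ?thesis .
  qed
  have s6: "[(\<Prod>q<M. 4 * int q + 3) = X] (mod int p)"
  proof -
    have "(\<Prod>q<M. 4 * int q + 3) = (\<Prod>q<M. 4 * int (M - 1 - q) + 3)" by (rule prod_rev)
    also have "\<dots> = (\<Prod>q<M. int p - (4 * int q + 2))"
      by (rule prod.cong) (use pK in \<open>auto simp: M_def of_nat_diff\<close>)
    also have "[\<dots> = (\<Prod>q<M. - (4 * int q + 2))] (mod int p)"
      by (rule cong_prod) (simp add: cong_iff_dvd_diff)
    also have "(\<Prod>q<M. - (4 * int q + 2)) = (-1) ^ M * X" unfolding X_def by (rule prod_neg)
    also have "(-1::int) ^ M = 1" unfolding M_def by simp
    finally show ?thesis by simp
  qed
  have s7: "[(\<Prod>q<M. 8 * int q + 5) = (i ^ K * W) ^ 2] (mod int p)"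
  proof -
    have "(\<Prod>q<M. 8 * int q + 5) = (\<Prod>q<K. 8 * int q + 5) * (\<Prod>q<K. 8 * int (K + q) + 5)"
      unfolding M_def using prod_split[of "\<lambda>q. 8 * int q + 5" K K] by (simp add: mult_2)
    also have "(\<Prod>q<K. 8 * int q + 5) = (\<Prod>q<K. 8 * int (K - 1 - q) + 5)" by (rule prod_rev)
    also have "\<dots> = (\<Prod>q<K. int p - (8 * int q + 4))"
      by (rule prod.cong) (use pK in \<open>auto simp: of_nat_diff\<close>)
    also have "(\<Prod>q<K. 8 * int (K + q) + 5) = (\<Prod>q<K. int p + (8 * int q + 4))"
      by (rule prod.cong) (use pK in auto)
    also have "[(\<Prod>q<K. int p - (8 * int q + 4)) * (\<Prod>q<K. int p + (8 * int q + 4)) =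
        (\<Prod>q<K. - (8 * int q + 4)) * (\<Prod>q<K. 8 * int q + 4)] (mod int p)"
      by (intro cong_mult cong_prod) (simp_all add: cong_iff_dvd_diff)
    also have "(\<Prod>q<K. - (8 * int q + 4)) * (\<Prod>q<K. 8 * int q + 4) = (-1) ^ K * W ^ 2"
      unfolding W_def prod_neg by (simp add: power2_eq_square)
    also have "[(-1) ^ K * W ^ 2 = (i ^ 2) ^ K * W ^ 2] (mod int p)"
    proof -
      have "-1 - i ^ 2 = - (i ^ 2 + 1)" by simp
      then have "int p dvd -1 - i ^ 2" using i2 by (simp only: dvd_minus_iff)
      then have "[-1 = i ^ 2] (mod int p)" by (simp add: cong_iff_dvd_diff)
      then show ?thesis by (intro cong_mult cong_pow cong_refl)
    qed
    also have "(i ^ 2) ^ K * W ^ 2 = (i ^ K * W) ^ 2" by (simp add: power_mult_distrib power_mult[symmetric] mult.commute)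
    finally show ?thesis .
  qed
  have s8: "S = 2 * (6 * K * (8 * K - 1))"
  proof -
    have "S = (\<Sum>k<p - 1. k) + (\<Sum>k<p - 1. (p - 2))" unfolding S_def by (rule sum.distrib)
    also have "(\<Sum>k<p - 1. (p - 2)) = (p - 1) * (p - 2)" by simp
    finally have "S = (\<Sum>k<p - 1. k) + (p - 1) * (p - 2)" .
    moreover have "2 * (\<Sum>k<p - 1. k) = (p - 1) * (p - 1 - 1)" by (rule two_sum)
    moreover have "p - 2 = 8 * K - 1" "p - 1 - 1 = 8 * K - 1" using pK by simp_all
    ultimately have A: "S = (\<Sum>k<p - 1. k) + 8 * K * (8 * K - 1)" and B: "2 * (\<Sum>k<p - 1. k) = 8 * K * (8 * K - 1)"
      using N by simp_all
    define m where "m = 8 * K * (8 * K - 1)"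
    have "2 * S = 3 * m" using A B unfolding m_def[symmetric] by simp
    moreover have "m = 4 * (2 * K * (8 * K - 1))" unfolding m_def by simp
    ultimately have "2 * S = 2 * (2 * (6 * K * (8 * K - 1)))" by simp
    then have "S = 2 * (6 * K * (8 * K - 1))" by simp
    then show ?thesis by simp
  qed
  define y where "y = h ^ (4 * K) * rho ^ (6 * K * (8 * K - 1)) * (2 * rho) ^ (2 * K) * X * (i ^ K * W)"
  have "[det (Dmat p) = y ^ 2] (mod int p)"
  proof -
    note det_factor
    also note s1
    also note s2
    also have "[h ^ (p - 1) * rho ^ S * (\<Prod>k<p - 1. Bf k) = h ^ (p - 1) * rho ^ S *
       ((4 * rho^2) ^ M * (X * (X * (i ^ K * W) ^ 2)))] (mod int p)"
    proof (rule cong_mult[OF cong_refl])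
      note s3
      also note s4
      also note s5
      also have "[(4 * rho^2) ^ M * (X * ((\<Prod>q<M. 4 * int q + 3) * (\<Prod>q<M. 8 * int q + 5))) =
         (4 * rho^2) ^ M * (X * (X * (i ^ K * W) ^ 2))] (mod int p)"
        using s6 s7 by (intro cong_mult cong_refl)
      finally show "[(\<Prod>k<p - 1. Bf k) = (4 * rho^2) ^ M * (X * (X * (i ^ K * W) ^ 2))] (mod int p)" .
    qed
    also have "h ^ (p - 1) * rho ^ S * ((4 * rho^2) ^ M * (X * (X * (i ^ K * W) ^ 2))) = y ^ 2"
    proof -
      have n1: "p - 1 = 4 * K * 2" using N by simp
      have e1: "h ^ (p - 1) = (h ^ (4 * K)) ^ 2" unfolding n1 by (rule power_mult)
      have n2: "S = 6 * K * (8 * K - 1) * 2" using s8 by simp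
      have e2: "rho ^ S = (rho ^ (6 * K * (8 * K - 1))) ^ 2" unfolding n2 by (rule power_mult)
      have f: "4 * rho^2 = (2 * rho)^2" by (simp add: power2_eq_square)
      have n3: "2 * M = 2 * K * 2" unfolding M_def by simp
      have "(4 * rho^2) ^ M = (2 * rho) ^ (2 * M)" unfolding f by (simp only: power_mult)
      also have "\<dots> = ((2 * rho) ^ (2 * K)) ^ 2" unfolding n3 by (rule power_mult)
      finally have e3: "(4 * rho^2) ^ M = ((2 * rho) ^ (2 * K)) ^ 2" .
      show ?thesis unfolding e1 e2 e3 y_def by (simp add: power_mult_distrib power2_eq_square algebra_simps)
    qed
    finally show ?thesis .
  qed
  moreover have "\<not> int p dvd y"
  proof -
    have X: "\<not> int p dvd X" unfolding X_def
      by (rule prod_dvd_nd, rule range_nd) (use pK in \<open>auto simp: M_def\<close>)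
    have W: "\<not> int p dvd W" unfolding W_def
      by (rule prod_dvd_nd, rule range_nd) (use pK in auto)
    have r2: "\<not> int p dvd 2 * rho" using two_nd rho_nd prime_dvd_mult_int by blast
    have pw: "\<not> int p dvd a ^ n" if "\<not> int p dvd a" for a n
      using that primeP prime_dvd_power by blast
    show ?thesis unfolding y_def using pw[OF h_nd] pw[OF rho_nd] pw[OF r2] X pw[OF i_nd] W
      by (simp add: prime_dvd_mult_iff[OF primeP])
  qed
  ultimately show ?thesis by blast
qed

end

context L begin

lemma exists_i: "\<exists>i. int p dvd i^2 + 1"
proof -
  obtain g where g: "residue_primroot p g"
  proof -
    have "1 < p" using p_ge5 by simp
    then show ?thesis using prime_primitive_root_exists[OF _ prime] that by blast
  qed
  have ordg: "ord p g = p - 1" using g prime by (simp add: residue_primroot_def totient_prime)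
  have gnd: "\<not> int p dvd int g"
  proof
    assume "int p dvd int g"
    then have "p dvd g" by simp
    then have "\<not> coprime p g" using p_ge5 by auto
    then show False using g by (simp add: residue_primroot_def)
  qed
  define e where "e = p div 4"
  have pe: "p = 4 * e + 1" using p4q unfolding e_def .
  have e1: "e \<ge> 1" using pe p_ge5 by simp
  define z where "z = int g ^ (2 * e)"
  have "z ^ 2 = int g ^ (p - 1)" unfolding z_def using pe by (simp add: power_mult[symmetric] mult.commute)
  then have z2: "[z ^ 2 = 1] (mod int p)" using fermat_int[OF gnd] by simp
  have nz: "\<not> [z = 1] (mod int p)"
  proof
    assume "[z = 1] (mod int p)"
    then have "[g ^ (2 * e) = 1] (mod p)" unfolding z_def using cong_int_iff by (metis of_nat_1 of_nat_power)
    then have "(p - 1) dvd 2 * e" using ordg ord_divides by metis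
    moreover have "p - 1 = 4 * e" using pe by simp
    ultimately have "4 * e dvd 2 * e" by simp
    moreover have "0 < 2 * e" using e1 by simp
    ultimately have "4 * e \<le> 2 * e" by (rule dvd_imp_le)
    then show False using e1 by simp
  qed
  have "int p dvd (z - 1) * (z + 1)"
  proof -
    have "(z - 1) * (z + 1) = z ^ 2 - 1" by (simp add: algebra_simps power2_eq_square)
    then show ?thesis using z2 by (simp add: cong_iff_dvd_diff)
  qed
  moreover have "\<not> int p dvd z - 1" using nz by (simp add: cong_iff_dvd_diff)
  ultimately have "int p dvd z + 1" using prime_dvd_mult_int by blast
  moreover have "(int g ^ e) ^ 2 = z" unfolding z_def by (simp add: power_mult[symmetric] mult.commute)
  ultimately show ?thesis by metis
qed

end

theorem theorem1p2:
  fixes p :: nat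
  assumes "prime p" and "p mod 4 = 1"
  shows "(p mod 8 = 1 \<longrightarrow> Legendre (D22 p) (int p) = 1) \<and>
         (p mod 8 = 5 \<longrightarrow> Legendre (D22 p) (int p) = 0)"
proof -
  interpret L p using assms by unfold_locales
  obtain i where i: "int p dvd i^2 + 1" using exists_i by blast
  define h where "h = (int p + 1) div 2"
  have h: "2 * h = int p + 1"
  proof -
    have "int p = 4 * int (p div 4) + 1" using p4q by simp
    then show ?thesis unfolding h_def by simp
  qed
  interpret L2 p i h using i h by unfold_locales
  show ?thesis
  proof (intro conjI impI)
    assume p8: "p mod 8 = 1"
    obtain y where y: "\<not> int p dvd y" "[det (Dmat p) = y^2] (mod int p)" using one_case[OF p8] by blast
    have "\<not> [D22 p = 0] (mod int p)"
    proof
      assume "[D22 p = 0] (mod int p)"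
      then have "[y^2 = 0] (mod int p)" using y(2) unfolding D22_def by (metis cong_sym cong_trans)
      then have "int p dvd y^2" by (simp add: cong_0_iff)
      then have "int p dvd y" using primeP prime_dvd_power by blast
      then show False using y(1) by simp
    qed
    moreover have "QuadRes (int p) (D22 p)" unfolding QuadRes_def D22_def using y(2) cong_sym by blast
    ultimately show "Legendre (D22 p) (int p) = 1" unfolding Legendre_def by simp
  next
    assume p8: "p mod 8 = 5"
    have "[D22 p = 0] (mod int p)" unfolding D22_def by (rule five_case[OF p8])
    then show "Legendre (D22 p) (int p) = 0" unfolding Legendre_def by simp
  qed
qed

end
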